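(* For every integer $k\ge 3$, let $T_k$ be the minimal $t\in\mathbb{N}$ such that for every $n\in\mathbb{N}$, every equinumerous $t$-coloring of $[tn]=\{1,2,\dots,tn\}$ contains a rainbow arithmetic progression of length $k$. Then $$T_k\le k^2\, e^{(1+o(1))(\ln\ln k)^2}\qquad\text{as } k\to\infty,$$ i.e., there is a function $\varepsilon(k)$ with $\varepsilon(k)\to 0$ as $k\to\infty$ such that $T_k\le k^2 \exp\big((1+\varepsilon(k))(\ln\ln k)^2\big)$ for all sufficiently large $k$.
   Context: An equinumerous $t$-coloring of a finite set is a coloring with $t$ colors in which each color is used exactly the same number of times (so in an equinumerous $t$-coloring of $[tn]$ each color class has exactly $n$ elements). Given a coloring of $[N]$, an arithmetic progression $a, a+d, \dots, a+(k-1)d$ (with $d\ge 1$) contained in $[N]$ is rainbow if its $k$ terms all receive distinct colors. $\ln$ denotes the natural logarithm. *)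

theory Defs
  imports Complex_Main
begin

definition equinumerous_coloring :: "nat \<Rightarrow> nat \<Rightarrow> (nat \<Rightarrow> nat) \<Rightarrow> bool" where
  "equinumerous_coloring t n c \<longleftrightarrow>
     c ` {1..t*n} \<subseteq> {..<t} \<and> (\<forall>j<t. card {x \<in> {1..t*n}. c x = j} = n)"

definition has_rainbow_AP :: "nat \<Rightarrow> nat \<Rightarrow> (nat \<Rightarrow> nat) \<Rightarrow> bool" where
  "has_rainbow_AP k N c \<longleftrightarrow>
     (\<exists>a d. 1 \<le> d \<and> 1 \<le> a \<and> a + (k - 1) * d \<le> N \<and> inj_on (\<lambda>i. c (a + i * d)) {..<k})"

definition good :: "nat \<Rightarrow> nat \<Rightarrow> bool" where
  "good k t \<longleftrightarrow> (\<forall>n\<ge>1. \<forall>c. equinumerous_coloring t n c \<longrightarrow> has_rainbow_AP k (t*n) c)"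

definition T :: "nat \<Rightarrow> nat" where
  "T k = (LEAST t. good k t)"

end

theory Submission
  imports Defs "HOL-Computational_Algebra.Primes" "HOL-Analysis.Harmonic_Numbers" "HOL-Real_Asymp.Real_Asymp"
begin

lemma mult_le_self:
  fixes p m :: nat assumes "prime p" "m > 0"
  shows "multiplicity p m \<le> m"
proof -
  have "p ^ multiplicity p m dvd m" by (simp add: multiplicity_dvd)
  hence "p ^ multiplicity p m \<le> m" using assms(2) by (simp add: dvd_imp_le)
  moreover have "multiplicity p m < 2 ^ multiplicity p m" by (rule less_exp)
  moreover have "(2::nat) ^ multiplicity p m \<le> p ^ multiplicity p m"
    using prime_ge_2_nat[OF assms(1)] by (rule power_mono) simp
  ultimately show ?thesis by linarith
qed

lemma legendre:
  fixes p :: nat assumes p: "prime p"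
  shows "multiplicity p (fact n :: nat) = (\<Sum>i\<in>{1..n}. n div p ^ i)"
proof (induction n)
  case 0 then show ?case by simp
next
  case (Suc n)
  have p1: "p > 1" using prime_gt_1_nat[OF p] .
  have A: "multiplicity p (fact (Suc n) :: nat) = multiplicity p (Suc n) + multiplicity p (fact n :: nat)"
  proof -
    have e: "(fact (Suc n)::nat) = Suc n * fact n" by simp
    have "(fact n :: nat) \<noteq> 0" by simp
    then have "multiplicity p (Suc n * fact n) = multiplicity p (Suc n) + multiplicity p (fact n :: nat)"
      using p by (intro prime_elem_multiplicity_mult_distrib) auto
    thus ?thesis by (simp only: e)
  qed
  have B: "multiplicity p (Suc n) = card {i\<in>{1..Suc n}. p ^ i dvd Suc n}"
  proof -
    have nu: "\<not> is_unit p" using p1 by auto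
    have H: "\<And>i. p ^ i dvd Suc n \<longleftrightarrow> i \<le> multiplicity p (Suc n)"
      using nu by (intro power_dvd_iff_le_multiplicity) auto
    have mle: "multiplicity p (Suc n) \<le> Suc n" using mult_le_self[OF p, of "Suc n"] by simp
    have "{i\<in>{1..Suc n}. p ^ i dvd Suc n} = {1..multiplicity p (Suc n)}"
    proof (rule set_eqI)
      fix i show "i \<in> {i\<in>{1..Suc n}. p ^ i dvd Suc n} \<longleftrightarrow> i \<in> {1..multiplicity p (Suc n)}"
        using H[of i] mle by (simp only: mem_Collect_eq atLeastAtMost_iff) linarith
    qed
    thus ?thesis by simp
  qed
  have C: "(\<Sum>i\<in>{1..Suc n}. Suc n div p ^ i) = (\<Sum>i\<in>{1..Suc n}. n div p ^ i) + card {i\<in>{1..Suc n}. p ^ i dvd Suc n}"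
  proof -
    have "(\<Sum>i\<in>{1..Suc n}. Suc n div p ^ i) = (\<Sum>i\<in>{1..Suc n}. n div p ^ i + (if p ^ i dvd Suc n then 1 else 0))"
      by (intro sum.cong refl) (auto simp: div_Suc dvd_eq_mod_eq_0)
    also have "\<dots> = (\<Sum>i\<in>{1..Suc n}. n div p ^ i) + card {i\<in>{1..Suc n}. p ^ i dvd Suc n}"
    proof -
      have "(\<Sum>i\<in>{1..Suc n}. (if p ^ i dvd Suc n then 1 else 0)::nat) = card {i\<in>{1..Suc n}. p ^ i dvd Suc n}"
        by (subst sum.inter_filter[symmetric]) simp_all
      then show ?thesis by (simp only: sum.distrib)
    qed
    finally show ?thesis .
  qed
  have D: "(\<Sum>i\<in>{1..Suc n}. n div p ^ i) = (\<Sum>i\<in>{1..n}. n div p ^ i)"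
  proof -
    have "n < 2 ^ Suc n" using less_exp[of "Suc n"] by simp
    also have "(2::nat) ^ Suc n \<le> p ^ Suc n" using prime_ge_2_nat[OF p] by (rule power_mono) simp
    finally have "n div p ^ Suc n = 0" by simp
    thus ?thesis by simp
  qed
  show ?case using A B C D Suc.IH by simp
qed

definition primepi :: "nat \<Rightarrow> nat" where
  "primepi x = card {p. prime p \<and> p \<le> x}"

lemma div_double_le: "(2*m) div q \<le> 2 * (m div q) + 1" for m q :: nat
proof (cases "q = 0")
  case True then show ?thesis by simp
next
  case False
  define a where "a = m div q"
  define b where "b = m mod q"
  have mab: "m = q * a + b" unfolding a_def b_def by simp
  have bq: "b < q" unfolding b_def using False by simp
  have "2*m < q * (2 * a + 2)" using mab bq by (simp add: algebra_simps)
  hence "(2*m) div q < 2 * a + 2" using False by (simp add: div_less_iff_less_mult mult.commute)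
  thus ?thesis unfolding a_def by simp
qed

lemma mult_central:
  fixes p m :: nat assumes p: "prime p" and m: "m \<ge> 1"
  shows "p ^ multiplicity p ((2*m) choose m) \<le> 2*m"
proof -
  define C where "C = (2*m) choose m"
  define v where "v = multiplicity p C"
  have p2: "p \<ge> 2" using prime_ge_2_nat[OF p] .
  have big: "x < p ^ i" if "x < i" for x i
  proof -
    have "x < 2 ^ i" using less_exp[of i] that by linarith
    also have "(2::nat) ^ i \<le> p ^ i" using p2 by (rule power_mono) simp
    finally show ?thesis .
  qed
  have fe: "fact (2*m) = fact m * fact m * C"
    using binomial_fact_lemma[of m "2*m"] unfolding C_def by simp
  have "multiplicity p (fact (2*m) :: nat) = multiplicity p (fact m * fact m :: nat) + v"
    unfolding fe v_def using p
    by (intro prime_elem_multiplicity_mult_distrib) (auto simp: C_def)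
  also have "multiplicity p (fact m * fact m :: nat) = 2 * multiplicity p (fact m :: nat)"
    using p by (subst prime_elem_multiplicity_mult_distrib) auto
  finally have e1: "multiplicity p (fact (2*m) :: nat) = 2 * multiplicity p (fact m :: nat) + v" .
  have e2: "multiplicity p (fact m :: nat) = (\<Sum>i\<in>{1..2*m}. m div p ^ i)"
  proof -
    have "(\<Sum>i\<in>{1..2*m}. m div p ^ i) = (\<Sum>i\<in>{1..m}. m div p ^ i) + (\<Sum>i\<in>{m+1..2*m}. m div p ^ i)"
      by (subst sum.union_disjoint[symmetric]) (auto intro: sum.cong)
    also have "(\<Sum>i\<in>{m+1..2*m}. m div p ^ i) = 0"
      using big by (intro sum.neutral) auto
    finally show ?thesis using legendre[OF p, of m] by simp
  qed
  have "(\<Sum>i\<in>{1..2*m}. (2*m) div p ^ i) \<le> (\<Sum>i\<in>{1..2*m}. 2 * (m div p ^ i) + (if p ^ i \<le> 2*m then 1 else 0))"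
  proof (rule sum_mono)
    fix i assume "i \<in> {1..2*m}"
    show "(2*m) div p ^ i \<le> 2 * (m div p ^ i) + (if p ^ i \<le> 2*m then 1 else 0)"
    proof (cases "p ^ i \<le> 2*m")
      case True then show ?thesis using div_double_le[of m "p^i"] by simp
    next
      case False then show ?thesis by simp
    qed
  qed
  also have "\<dots> = 2 * (\<Sum>i\<in>{1..2*m}. m div p ^ i) + card {i\<in>{1..2*m}. p ^ i \<le> 2*m}"
  proof -
    have "(\<Sum>i\<in>{1..2*m}. (if p ^ i \<le> 2*m then 1 else 0)::nat) = card {i\<in>{1..2*m}. p ^ i \<le> 2*m}"
      by (subst sum.inter_filter[symmetric]) simp_all
    then show ?thesis by (simp only: sum.distrib sum_distrib_left)
  qed
  finally have vle: "v \<le> card {i\<in>{1..2*m}. p ^ i \<le> 2*m}"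
    using e1 e2 legendre[OF p, of "2*m"] by simp
  show ?thesis
  proof (rule ccontr)
    assume "\<not> p ^ multiplicity p ((2*m) choose m) \<le> 2*m"
    hence gt: "2*m < p ^ v" unfolding v_def C_def by simp
    have "{i\<in>{1..2*m}. p ^ i \<le> 2*m} \<subseteq> {1..<v}"
    proof
      fix i assume "i \<in> {i\<in>{1..2*m}. p ^ i \<le> 2*m}"
      hence "i \<ge> 1" "p ^ i < p ^ v" using gt by auto
      hence "i < v" using power_less_imp_less_exp[of p i v] p2 by simp
      thus "i \<in> {1..<v}" using \<open>i \<ge> 1\<close> by simp
    qed
    hence "card {i\<in>{1..2*m}. p ^ i \<le> 2*m} \<le> v - 1" using card_mono[of "{1..<v}"] by fastforce
    moreover have "v \<ge> 1" using gt m by (cases v) auto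
    ultimately show False using vle by linarith
  qed
qed

lemma central_le_primepi:
  fixes m :: nat assumes m: "m \<ge> 1"
  shows "(2*m) choose m \<le> (2*m) ^ primepi (2*m)"
proof -
  define C where "C = (2*m) choose m"
  have C0: "C > 0" unfolding C_def by simp
  have "C = (\<Prod>p\<in>prime_factors C. p ^ multiplicity p C)"
    using prime_factorization_nat[OF C0] .
  also have "\<dots> \<le> (2*m) ^ primepi (2*m)"
  proof (rule prod_le_power)
    fix p assume "p \<in> prime_factors C"
    hence "prime p" by (auto simp: in_prime_factors_iff)
    thus "0 \<le> p ^ multiplicity p C \<and> p ^ multiplicity p C \<le> 2*m"
      using mult_central[OF _ m] unfolding C_def by simp
  next
    have "prime_factors C \<subseteq> {p. prime p \<and> p \<le> 2*m}"
    proof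
      fix p assume "p \<in> prime_factors C"
      hence pp: "prime p" "p dvd C" by (auto simp: in_prime_factors_iff)
      have fe: "fact (2*m) = fact m * fact m * C"
        using binomial_fact_lemma[of m "2*m"] unfolding C_def by simp
      have "C dvd fact (2*m)" unfolding fe by simp
      hence "p dvd fact (2*m)" using pp(2) by (rule dvd_trans[rotated])
      thus "p \<in> {p. prime p \<and> p \<le> 2*m}" using pp prime_dvd_fact_iff by auto
    qed
    thus "card (prime_factors C) \<le> primepi (2*m)"
      unfolding primepi_def by (intro card_mono) auto
  next
    show "1 \<le> 2*m" using m by simp
  qed
  finally show ?thesis unfolding C_def .
qed

lemma primes_mid_prod:
  fixes m :: nat assumes m: "m \<ge> 1"
  shows "(\<Prod>{p. prime p \<and> m < p \<and> p \<le> 2*m}) \<le> 4 ^ m"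
proof -
  define C where "C = (2*m) choose m"
  define P where "P = {p. prime p \<and> m < p \<and> p \<le> 2*m}"
  have C0: "C > 0" unfolding C_def by simp
  have sub: "P \<subseteq> prime_factors C"
  proof
    fix p assume "p \<in> P"
    hence pp: "prime p" "m < p" "p \<le> 2*m" unfolding P_def by auto
    have "p dvd fact m * fact m * C"
      using binomial_fact_lemma[of m "2*m"] pp(1,3) prime_dvd_fact_iff[of p "2*m"] unfolding C_def
      by (simp add: mult_2)
    moreover have "\<not> p dvd fact m" using pp prime_dvd_fact_iff[of p m] by simp
    ultimately have "p dvd C" using pp(1) by (simp add: prime_dvd_mult_iff)
    thus "p \<in> prime_factors C" using pp C0 by (auto simp: in_prime_factors_iff)
  qed
  have fin: "finite (prime_factors C)" by simp
  have "\<Prod>P \<le> (\<Prod>p\<in>P. p ^ multiplicity p C)"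
  proof (rule prod_mono)
    fix p assume "p \<in> P"
    hence "p \<in> prime_factors C" using sub by auto
    hence "multiplicity p C \<ge> 1" "p \<ge> 1"
      by (auto simp: prime_factors_multiplicity in_prime_factors_iff prime_gt_0_nat Suc_le_eq)
    thus "0 \<le> p \<and> p \<le> p ^ multiplicity p C"
      by (metis le0 power_increasing power_one_right)
  qed
  also have "\<dots> \<le> (\<Prod>p\<in>prime_factors C. p ^ multiplicity p C)"
  proof -
    have "(\<Prod>p\<in>prime_factors C. p ^ multiplicity p C)
        = (\<Prod>p\<in>P. p ^ multiplicity p C) * (\<Prod>p\<in>prime_factors C - P. p ^ multiplicity p C)"
      using prod.subset_diff[OF sub fin] by (simp add: mult.commute)
    moreover have "(\<Prod>p\<in>prime_factors C - P. p ^ multiplicity p C) \<ge> 1"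
      by (intro prod_ge_1) (auto simp: in_prime_factors_iff prime_gt_0_nat Suc_le_eq)
    ultimately show ?thesis by simp
  qed
  also have "\<dots> = C" using prime_factorization_nat[OF C0] by simp
  also have "C \<le> 2 ^ (2*m)" unfolding C_def by (rule binomial_le_pow2)
  also have "(2::nat) ^ (2*m) = 4 ^ m" by (simp add: power_mult)
  finally show ?thesis unfolding P_def .
qed

lemma ln_le_sixth: "x \<ge> 200 \<Longrightarrow> ln x + 1 \<le> x / 6" for x :: real
proof -
  assume x: "x \<ge> 200"
  have "ln x = ln (x/16) + ln 16" using x by (simp add: ln_div)
  also have "ln (x/16) \<le> x/16 - 1" using x by (intro ln_le_minus_one) auto
  also have "ln (16::real) \<le> 6" 
  proof -
    have "ln (16::real) = ln (4 ^ 2)" by simp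
    also have "\<dots> = 2 * ln 4" by (simp only: ln_realpow)
    finally have "ln (16::real) = 2 * ln 4" .
    also have "ln (4::real) \<le> 4 - 1" by (rule ln_le_minus_one) auto
    finally show ?thesis by simp
  qed
  finally show ?thesis using x by simp
qed

lemma primepi_mono: "a \<le> b \<Longrightarrow> primepi a \<le> primepi b"
  unfolding primepi_def by (intro card_mono) auto

lemma cheb_lower:
  fixes D :: nat assumes D: "D \<ge> 200"
  shows "real (primepi D) \<ge> real D / (2 * ln (real D))"
proof -
  define m where "m = D div 2"
  have m1: "m \<ge> 1" using D unfolding m_def by simp
  have m2: "real D - 1 \<le> 2 * real m" "2 * m \<le> D" unfolding m_def by linarith+
  have "4 ^ m / (2 * real m) \<le> real ((2*m) choose m)"
    using central_binomial_lower_bound[of m] m1 by simp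
  also have "\<dots> \<le> real ((2*m) ^ primepi (2*m))"
    using central_le_primepi[OF m1] by linarith
  also have "\<dots> \<le> real (D ^ primepi D)"
  proof -
    have "(2*m) ^ primepi (2*m) \<le> D ^ primepi (2*m)" using m2 by (intro power_mono) auto
    also have "\<dots> \<le> D ^ primepi D" using D m2 by (intro power_increasing primepi_mono) auto
    finally show ?thesis by linarith
  qed
  finally have ineq: "4 ^ m / (2 * real m) \<le> real D ^ primepi D" by simp
  have pos: "4 ^ m / (2 * real m) > 0" using m1 by simp
  have "ln (4 ^ m / (2 * real m)) \<le> ln (real D ^ primepi D)"
    using ineq pos D by (subst ln_le_cancel_iff) auto
  hence "real m * ln 4 - ln (2 * real m) \<le> real (primepi D) * ln (real D)"
    using m1 D by (simp add: ln_div ln_realpow)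
  moreover have "ln (2 * real m) \<le> ln (real D)" using m1 m2 by (subst ln_le_cancel_iff) auto
  moreover have "real m * ln 4 \<ge> (real D - 1) * ln 2"
  proof -
    have "ln (4::real) = ln (2 ^ 2)" by simp
    also have "\<dots> = 2 * ln 2" by (simp only: ln_realpow)
    finally have "ln (4::real) = 2 * ln 2" .
    thus ?thesis using m2 by (simp add: mult_right_mono)
  qed
  ultimately have A: "(real D - 1) * ln 2 - ln (real D) \<le> real (primepi D) * ln (real D)" by linarith
  have l2: "ln (2::real) \<ge> 2/3" by (rule ln2_ge_two_thirds)
  have l2': "ln (2::real) \<le> 1" using ln_le_minus_one[of 2] by simp
  have B: "ln (real D) + 1 \<le> real D / 6" using ln_le_sixth[of "real D"] D by simp
  have "real D / 2 \<le> (real D - 1) * ln 2 - ln (real D)"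
  proof -
    have "(real D - 1) * ln 2 \<ge> (real D - 1) * (2/3)" using l2 D by (intro mult_left_mono) auto
    moreover have "(real D - 1) * (2/3) = (2/3) * real D - 2/3" by (simp add: field_simps)
    ultimately show ?thesis using B by linarith
  qed
  hence "real D / 2 \<le> real (primepi D) * ln (real D)" using A by linarith
  moreover have "ln (real D) > 0" using D by simp
  ultimately show ?thesis by (simp add: field_simps)
qed

definition Sp :: "nat \<Rightarrow> real" where
  "Sp x = (\<Sum>p\<in>{p. prime p \<and> p \<le> x}. 1 / real p)"

lemma primes_mid_card:
  fixes j :: nat
  shows "j * card {p::nat. prime p \<and> 2^j < p \<and> p \<le> 2^(Suc j)} \<le> 2^(Suc j)"
proof (cases "j = 0")
  case True then show ?thesis by simp
next
  case False
  define m :: nat where "m = 2^j"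
  define P where "P = {p. prime p \<and> m < p \<and> p \<le> 2*m}"
  have m1: "m \<ge> 1" unfolding m_def by simp
  have fin: "finite P" unfolding P_def by simp
  have "m ^ card P = (\<Prod>p\<in>P. m)" by simp
  also have "\<dots> \<le> \<Prod>P" by (rule prod_mono) (auto simp: P_def)
  also have "\<dots> \<le> 4 ^ m" unfolding P_def by (rule primes_mid_prod[OF m1])
  finally have le: "m ^ card P \<le> 4 ^ m" .
  have e1: "(2::nat) ^ (j * card P) = m ^ card P" unfolding m_def by (simp add: power_mult)
  have e2: "(4::nat) ^ m = 2 ^ (2 * m)" by (simp add: power_mult)
  have "(2::nat) ^ (j * card P) \<le> 2 ^ (2 * m)" using le e1 e2 by simp
  hence "j * card P \<le> 2 * m" by (rule power_le_imp_le_exp[rotated]) simp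
  thus ?thesis unfolding P_def m_def by simp
qed

lemma Sp_dyadic: "Sp (2^(Suc j)) \<le> 1/2 + 2 * harm j"
proof (induction j)
  case 0
  have "{p. prime p \<and> p \<le> (2::nat)} = {2}"
    using prime_ge_2_nat by (auto simp: le_Suc_eq intro: antisym)
  thus ?case by (simp add: Sp_def harm_nonneg)
next
  case (Suc j)
  define P where "P = {p. prime p \<and> (2::nat)^(Suc j) < p \<and> p \<le> 2^(Suc (Suc j))}"
  have split: "{p. prime p \<and> p \<le> (2::nat)^(Suc (Suc j))} = {p. prime p \<and> p \<le> 2^(Suc j)} \<union> P"
  proof -
    have "(2::nat)^(Suc j) \<le> 2^(Suc (Suc j))" by (rule power_increasing) auto
    thus ?thesis unfolding P_def by (auto simp del: power_Suc intro: order_trans)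
  qed
  have disj: "{p. prime p \<and> p \<le> (2::nat)^(Suc j)} \<inter> P = {}" unfolding P_def by auto
  have "Sp (2^(Suc (Suc j))) = Sp (2^(Suc j)) + (\<Sum>p\<in>P. 1 / real p)"
    unfolding Sp_def split by (subst sum.union_disjoint) (auto simp: P_def disj)
  also have "(\<Sum>p\<in>P. 1 / real p) \<le> (\<Sum>p\<in>P. 1 / 2^(Suc j))"
  proof (rule sum_mono)
    fix p assume "p \<in> P"
    hence "real p \<ge> 2^(Suc j)" unfolding P_def by (simp del: power_Suc)
    moreover have pos: "(0::real) < 2^(Suc j)" by simp
    ultimately have "real p > 0" by linarith
    hence "real p * 2^(Suc j) > 0" using pos by simp
    thus "1 / real p \<le> 1 / 2^(Suc j)" using \<open>real p \<ge> 2^(Suc j)\<close> by (intro divide_left_mono) auto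
  qed
  also have "\<dots> = real (card P) / 2^(Suc j)" by simp
  also have "\<dots> \<le> 2 / real (Suc j)"
  proof -
    have "real (Suc j) * real (card P) \<le> 2^(Suc (Suc j))"
      using primes_mid_card[of "Suc j"] unfolding P_def
      by (metis of_nat_le_iff of_nat_mult of_nat_numeral of_nat_power)
    thus ?thesis by (simp add: field_simps)
  qed
  finally have A: "Sp (2^(Suc (Suc j))) \<le> Sp (2^(Suc j)) + 2 / real (Suc j)" by simp
  have "(harm (Suc j) :: real) = harm j + 1 / real (Suc j)" by (simp add: harm_Suc inverse_eq_divide)
  thus ?case using Suc.IH A by linarith
qed

lemma harm_le_ln: "n \<ge> 1 \<Longrightarrow> harm n \<le> ln (real n) + (1::real)"
proof -
  assume n: "n \<ge> 1"
  have "decseq (\<lambda>n. harm (Suc n) - ln (real (Suc n)) :: real)"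
    using decseq_harm_diff_ln by simp
  hence "(harm (Suc (n-1)) :: real) - ln (real (Suc (n-1))) \<le> harm (Suc 0) - ln (real (Suc 0))"
    unfolding decseq_def by blast
  moreover have "(harm 0 :: real) = 0" by (simp add: harm_def)
  ultimately show ?thesis using n by (simp add: harm_Suc)
qed

lemma S_bound:
  fixes k :: nat assumes k: "k \<ge> 3"
  shows "(\<Sum>p\<in>{p. prime p \<and> p < k}. 1 / real p) \<le> 5/2 + 2 * ln (log 2 (real k))"
proof -
  define J where "J = nat \<lceil>log 2 (real k)\<rceil>"
  have lk: "log 2 (real k) > 1"
  proof -
    have "log 2 (real k) > log 2 2" using k by (subst log_less_cancel_iff) auto
    thus ?thesis by simp
  qed
  have J2: "J \<ge> 2" unfolding J_def using lk by linarith
  have Jle: "real J - 1 \<le> log 2 (real k)" unfolding J_def using lk by linarith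
  have kJ: "real k \<le> 2 ^ J"
  proof -
    have "real k = 2 powr (log 2 (real k))" using k by simp
    also have "\<dots> \<le> 2 powr (real J)" unfolding J_def by (intro powr_mono) linarith+
    also have "\<dots> = 2 ^ J" by (simp add: powr_realpow)
    finally show ?thesis .
  qed
  hence kJ': "k \<le> 2 ^ J" by (metis of_nat_le_iff of_nat_numeral of_nat_power)
  have "(\<Sum>p\<in>{p. prime p \<and> p < k}. 1 / real p) \<le> Sp (2 ^ J)"
    unfolding Sp_def using kJ' by (intro sum_mono2) auto
  also have "Sp (2 ^ J) \<le> 1/2 + 2 * harm (J - 1)"
    using Sp_dyadic[of "J-1"] J2 by (simp add: Suc_diff_1)
  also have "harm (J - 1) \<le> ln (real (J - 1)) + (1::real)" using J2 by (intro harm_le_ln) auto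
  also have "ln (real (J - 1)) \<le> ln (log 2 (real k))"
    using J2 Jle by (subst ln_le_cancel_iff) (auto simp: of_nat_diff)
  finally show ?thesis by simp
qed

lemma alt_partial: "(\<Sum>j\<le>r. (-1::real)^j * real (Suc n choose j)) = (-1)^r * real (n choose r)"
proof (induction r)
  case 0 then show ?case by simp
next
  case (Suc r)
  have "(\<Sum>j\<le>Suc r. (-1::real)^j * real (Suc n choose j))
      = (-1)^r * real (n choose r) + (-1)^(Suc r) * real (Suc n choose Suc r)"
    using Suc.IH by simp
  also have "real (Suc n choose Suc r) = real (n choose r) + real (n choose Suc r)" by simp
  finally show ?case by (simp add: algebra_simps)
qed

lemma sum_by_card:
  assumes "finite B"
  shows "(\<Sum>A\<in>{A. A \<subseteq> B \<and> card A \<le> r}. g (card A)) = (\<Sum>j\<le>r. real (card B choose j) * g j)"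
proof -
  have fin: "finite {A. A \<subseteq> B \<and> card A \<le> r}" using assms by simp
  have "(\<Sum>A\<in>{A. A \<subseteq> B \<and> card A \<le> r}. g (card A))
      = (\<Sum>j\<le>r. \<Sum>A\<in>{A \<in> {A. A \<subseteq> B \<and> card A \<le> r}. card A = j}. g (card A))"
    by (rule sum.group[symmetric]) (use fin in auto)
  also have "\<dots> = (\<Sum>j\<le>r. \<Sum>A\<in>{A. A \<subseteq> B \<and> card A = j}. g j)"
    by (intro sum.cong refl) auto
  also have "\<dots> = (\<Sum>j\<le>r. real (card B choose j) * g j)"
    using n_subsets[OF assms] by simp
  finally show ?thesis .
qed

lemma alt_sum_le:
  fixes B :: "'a set"
  assumes "finite B" "odd r"
  shows "(\<Sum>A\<in>{A. A \<subseteq> B \<and> card A \<le> r}. (-1::real)^card A) \<le> (if B = {} then 1 else 0)"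
proof -
  have "(\<Sum>A\<in>{A. A \<subseteq> B \<and> card A \<le> r}. (-1::real)^card A) = (\<Sum>j\<le>r. real (card B choose j) * (-1)^j)"
    by (rule sum_by_card[OF assms(1)])
  also have "\<dots> = (\<Sum>j\<le>r. (-1)^j * real (card B choose j))" by (simp add: mult.commute)
  finally have e: "(\<Sum>A\<in>{A. A \<subseteq> B \<and> card A \<le> r}. (-1::real)^card A) = (\<Sum>j\<le>r. (-1)^j * real (card B choose j))" .
  show ?thesis
  proof (cases "B = {}")
    case True
    have "(\<Sum>j\<le>r. (-1::real)^j * real (0 choose j)) = (\<Sum>j\<in>{0}. (-1::real)^j * real (0 choose j))"
      by (intro sum.mono_neutral_right) auto
    then show ?thesis using e True by simp
  next
    case False
    then obtain n where n: "card B = Suc n" using assms(1) by (cases "card B") auto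
    have "(\<Sum>j\<le>r. (-1::real)^j * real (card B choose j)) = - real (n choose r)"
      using alt_partial[where r=r and n=n] n assms(2) by simp
    then show ?thesis using e False by simp
  qed
qed

lemma card_multiples:
  fixes q D :: nat assumes q: "q \<ge> 1"
  shows "card {d\<in>{1..D}. q dvd d} = D div q"
proof -
  have "{d\<in>{1..D}. q dvd d} = (\<lambda>j. q * j) ` {1..D div q}"
  proof (rule set_eqI, rule iffI)
    fix d assume "d \<in> {d\<in>{1..D}. q dvd d}"
    then obtain j where j: "d = q * j" "1 \<le> d" "d \<le> D" by auto
    hence "j \<ge> 1" by (cases j) auto
    moreover have "j \<le> D div q" using j q by (simp add: less_eq_div_iff_mult_less_eq mult.commute)
    ultimately show "d \<in> (\<lambda>j. q * j) ` {1..D div q}" using j by auto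
  next
    fix d assume "d \<in> (\<lambda>j. q * j) ` {1..D div q}"
    then obtain j where "j \<in> {1..D div q}" "d = q * j" by blast
    hence j: "d = q * j" "1 \<le> j" "j \<le> D div q" by auto
    hence "q * j \<le> D" using q by (simp add: less_eq_div_iff_mult_less_eq mult.commute)
    moreover have "1 \<le> q * j" using j q by simp
    ultimately show "d \<in> {d\<in>{1..D}. q dvd d}" using j by auto
  qed
  moreover have "inj_on (\<lambda>j. q * j) {1..D div q}" using q by (auto simp: inj_on_def)
  ultimately show ?thesis by (simp add: card_image)
qed

lemma primes_prod_dvd_iff:
  fixes A :: "nat set"
  assumes "finite A" "\<forall>p\<in>A. prime p"
  shows "(\<Prod>A) dvd d \<longleftrightarrow> (\<forall>p\<in>A. p dvd d)"
  using assms
proof (induction A rule: finite_induct)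
  case empty then show ?case by simp
next
  case (insert p A)
  have pp: "prime p" using insert by simp
  have "\<not> p dvd \<Prod>A"
  proof
    assume "p dvd \<Prod>A"
    then obtain x where "x \<in> A" "p dvd x" using prime_dvd_prod_iff[of A p id] insert pp by auto
    hence "p = x" using insert pp by (intro primes_dvd_imp_eq) auto
    thus False using \<open>x \<in> A\<close> insert by simp
  qed
  hence cop: "coprime p (\<Prod>A)" using pp by (simp add: prime_imp_coprime)
  have "(\<Prod>(insert p A)) dvd d \<longleftrightarrow> p * \<Prod>A dvd d" using insert by simp
  also have "\<dots> \<longleftrightarrow> p dvd d \<and> \<Prod>A dvd d"
    using cop by (auto intro: divides_mult dvd_mult_left dvd_mult_right)
  finally show ?case using insert by simp
qed

lemma brun_basic:
  fixes Q :: "nat set" and D r :: nat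
  assumes fin: "finite Q" and pr: "\<forall>p\<in>Q. prime p" and r: "odd r"
  shows "real (card {d\<in>{1..D}. \<forall>p\<in>Q. \<not> p dvd d})
         \<ge> (\<Sum>A\<in>{A. A \<subseteq> Q \<and> card A \<le> r}. (-1)^card A * real (D div \<Prod>A))"
proof -
  define F where "F = {A. A \<subseteq> Q \<and> card A \<le> r}"
  define B where "B d = {p\<in>Q. p dvd d}" for d
  have finF: "finite F" unfolding F_def using fin by simp
  have "real (card {d\<in>{1..D}. \<forall>p\<in>Q. \<not> p dvd d}) = (\<Sum>d\<in>{1..D}. if B d = {} then 1 else 0)"
  proof -
    have "{d\<in>{1..D}. \<forall>p\<in>Q. \<not> p dvd d} = {d\<in>{1..D}. B d = {}}" unfolding B_def by auto
    moreover have "(\<Sum>d\<in>{1..D}. if B d = {} then 1 else 0) = (\<Sum>d\<in>{d\<in>{1..D}. B d = {}}. (1::real))"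
      by (rule sum.inter_filter[symmetric]) simp
    ultimately show ?thesis by simp
  qed
  also have "\<dots> \<ge> (\<Sum>d\<in>{1..D}. \<Sum>A\<in>{A. A \<subseteq> B d \<and> card A \<le> r}. (-1::real)^card A)"
    by (intro sum_mono alt_sum_le r) (auto simp: B_def fin)
  also have "(\<Sum>d\<in>{1..D}. \<Sum>A\<in>{A. A \<subseteq> B d \<and> card A \<le> r}. (-1::real)^card A)
           = (\<Sum>d\<in>{1..D}. \<Sum>A\<in>F. if A \<subseteq> B d then (-1::real)^card A else 0)"
  proof (rule sum.cong[OF refl])
    fix d assume "d \<in> {1..D}"
    have "{A \<in> F. A \<subseteq> B d} = {A. A \<subseteq> B d \<and> card A \<le> r}" unfolding F_def B_def by auto
    thus "(\<Sum>A\<in>{A. A \<subseteq> B d \<and> card A \<le> r}. (-1::real)^card A) = (\<Sum>A\<in>F. if A \<subseteq> B d then (-1::real)^card A else 0)"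
      using sum.inter_filter[OF finF, of "\<lambda>A. (-1::real)^card A" "\<lambda>A. A \<subseteq> B d"] by simp
  qed
  also have "\<dots> = (\<Sum>A\<in>F. \<Sum>d\<in>{1..D}. if A \<subseteq> B d then (-1::real)^card A else 0)"
    by (rule sum.swap)
  also have "\<dots> = (\<Sum>A\<in>F. (-1)^card A * real (D div \<Prod>A))"
  proof (intro sum.cong refl)
    fix A assume A: "A \<in> F"
    hence AQ: "A \<subseteq> Q" unfolding F_def by simp
    hence finA: "finite A" using fin finite_subset by blast
    have pA: "\<forall>p\<in>A. prime p" using AQ pr by auto
    have "{d\<in>{1..D}. A \<subseteq> B d} = {d\<in>{1..D}. \<Prod>A dvd d}"
      using primes_prod_dvd_iff[OF finA pA] AQ unfolding B_def by auto
    moreover have "\<Prod>A \<ge> 1" using pA by (intro prod_ge_1) (metis Suc_leI prime_gt_0_nat One_nat_def)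
    ultimately have c: "card {d\<in>{1..D}. A \<subseteq> B d} = D div \<Prod>A" using card_multiples by simp
    have "(\<Sum>d\<in>{1..D}. if A \<subseteq> B d then (-1::real)^card A else 0) = (-1)^card A * real (card {d\<in>{1..D}. A \<subseteq> B d})"
    proof -
      have "(\<Sum>d\<in>{1..D}. if A \<subseteq> B d then (-1::real)^card A else 0) = (\<Sum>d\<in>{d\<in>{1..D}. A \<subseteq> B d}. (-1::real)^card A)"
        by (rule sum.inter_filter[symmetric]) simp
      thus ?thesis by simp
    qed
    thus "(\<Sum>d\<in>{1..D}. if A \<subseteq> B d then (-1::real)^card A else 0) = (-1)^card A * real (D div \<Prod>A)"
      using c by simp
  qed
  finally show ?thesis unfolding F_def .
qed

lemma div_bounds_real:
  fixes D q :: nat assumes q: "q \<ge> 1"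
  shows "real (D div q) \<le> real D / real q" "real D / real q - 1 \<le> real (D div q)"
proof -
  have e: "real D = real q * real (D div q) + real (D mod q)"
    by (metis of_nat_add of_nat_mult div_mult_mod_eq mult.commute)
  have m: "real (D mod q) < real q" using q by simp
  have qp: "real q > 0" using q by simp
  show "real (D div q) \<le> real D / real q" using e qp by (simp add: field_simps)
  show "real D / real q - 1 \<le> real (D div q)" using e m qp by (simp add: field_simps)
qed

lemma brun_L1:
  fixes Q :: "nat set" and r D :: nat assumes fin: "finite Q" and pr: "\<forall>p\<in>Q. prime p"
  defines "F \<equiv> {A. A \<subseteq> Q \<and> card A \<le> r}"
  shows "(\<Sum>A\<in>F. (-1)^card A * real (D div \<Prod>A))
        \<ge> real D * (\<Sum>A\<in>F. (-1)^card A / real (\<Prod>A)) - real (card F)"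
proof -
  have "(\<Sum>A\<in>F. (-1)^card A * real (D div \<Prod>A)) \<ge> (\<Sum>A\<in>F. real D * ((-1)^card A / real (\<Prod>A)) - 1)"
  proof (rule sum_mono)
    fix A assume "A \<in> F"
    hence "A \<subseteq> Q" unfolding F_def by simp
    hence pA: "\<forall>p\<in>A. prime p" using pr by auto
    have q1: "\<Prod>A \<ge> 1" using pA by (intro prod_ge_1) (metis Suc_leI prime_gt_0_nat One_nat_def)
    note b = div_bounds_real[OF q1, of D]
    show "real D * ((-1)^card A / real (\<Prod>A)) - 1 \<le> (-1)^card A * real (D div \<Prod>A)"
    proof (cases "even (card A)")
      case True then show ?thesis using b by simp
    next
      case False then show ?thesis using b by simp
    qed
  qed
  also have "(\<Sum>A\<in>F. real D * ((-1)^card A / real (\<Prod>A)) - 1) = real D * (\<Sum>A\<in>F. (-1)^card A / real (\<Prod>A)) - real (card F)"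
    by (simp add: sum_subtractf sum_distrib_left)
  finally show ?thesis .
qed

lemma inv_prod_real: "(\<Prod>x\<in>X. c / real x) = c ^ card X / real (\<Prod>X)"
  by (simp add: prod_dividef)

lemma brun_L2:
  fixes Q :: "nat set" assumes fin: "finite Q"
  shows "(\<Sum>A\<in>Pow Q. (-1)^card A / real (\<Prod>A)) = (\<Prod>p\<in>Q. 1 - 1 / real p)"
proof -
  have "(\<Prod>p\<in>Q. 1 - 1 / real p) = (\<Sum>X\<in>Pow Q. (-1) ^ card X * (\<Prod>x\<in>X. 1 / real x) * (\<Prod>x\<in>Q-X. 1))"
    by (rule prod_diff_conv_sum[OF fin])
  also have "\<dots> = (\<Sum>A\<in>Pow Q. (-1)^card A / real (\<Prod>A))"
    by (intro sum.cong refl) (simp add: inv_prod_real)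
  finally show ?thesis ..
qed

lemma brun_L3:
  fixes Q :: "nat set" and r :: nat assumes fin: "finite Q" and pr: "\<forall>p\<in>Q. prime p"
  defines "F \<equiv> {A. A \<subseteq> Q \<and> card A \<le> r}"
  shows "(\<Sum>A\<in>Pow Q - F. 1 / real (\<Prod>A)) \<le> exp (3 * (\<Sum>p\<in>Q. 1 / real p)) / 3^(Suc r)"
proof -
  have pos: "real (\<Prod>A) > 0" if "A \<in> Pow Q" for A
  proof -
    have "\<forall>p\<in>A. prime p" using that pr by auto
    hence "\<Prod>A > 0" by (metis prime_gt_0_nat prod_pos)
    thus ?thesis by (simp only: of_nat_0_less_iff)
  qed
  have "(\<Sum>A\<in>Pow Q - F. 1 / real (\<Prod>A)) \<le> (\<Sum>A\<in>Pow Q - F. (3^card A / real (\<Prod>A)) / 3^(Suc r))"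
  proof (rule sum_mono)
    fix A assume A: "A \<in> Pow Q - F"
    hence "card A \<ge> Suc r" unfolding F_def by auto
    hence "(3::real)^(Suc r) \<le> 3^card A" by (intro power_increasing) auto
    hence "1 \<le> 3^card A / (3::real)^(Suc r)" by simp
    hence "1 / real (\<Prod>A) \<le> (3^card A / 3^(Suc r)) / real (\<Prod>A)"
      using pos[of A] A by (intro divide_right_mono) auto
    thus "1 / real (\<Prod>A) \<le> (3^card A / real (\<Prod>A)) / 3^(Suc r)" by (simp add: field_simps)
  qed
  also have "\<dots> \<le> (\<Sum>A\<in>Pow Q. (3^card A / real (\<Prod>A)) / 3^(Suc r))"
  proof -
    have nn: "0 \<le> (3^card A / real (\<Prod>A)) / (3::real)^(Suc r)" if "A \<in> Pow Q" for A
      using pos[OF that] by (intro divide_nonneg_pos divide_nonneg_nonneg) (auto simp del: of_nat_prod)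
    show ?thesis by (intro sum_mono2) (use fin nn in auto)
  qed
  also have "\<dots> = (\<Sum>A\<in>Pow Q. 3^card A / real (\<Prod>A)) / 3^(Suc r)"
    by (simp add: sum_divide_distrib)
  also have "(\<Sum>A\<in>Pow Q. 3^card A / real (\<Prod>A)) = (\<Prod>p\<in>Q. 3 / real p + 1)"
  proof -
    have "(\<Prod>p\<in>Q. 3 / real p + 1) = (\<Sum>X\<in>Pow Q. (\<Prod>x\<in>X. 3 / real x) * (\<Prod>x\<in>Q-X. 1))"
      by (rule prod_add[OF fin])
    also have "\<dots> = (\<Sum>A\<in>Pow Q. 3^card A / real (\<Prod>A))"
      by (intro sum.cong refl) (simp add: inv_prod_real)
    finally show ?thesis ..
  qed
  also have "(\<Prod>p\<in>Q. 3 / real p + 1) \<le> (\<Prod>p\<in>Q. exp (3 / real p))"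
    by (intro prod_mono) (auto simp: add.commute[of _ 1])
  also have "\<dots> = exp (3 * (\<Sum>p\<in>Q. 1 / real p))"
    by (simp add: exp_sum[OF fin] sum_distrib_left)
  finally show ?thesis by (simp add: divide_right_mono)
qed

lemma one_minus_ge_exp: "0 \<le> x \<Longrightarrow> x \<le> 1/2 \<Longrightarrow> exp (-2*x) \<le> 1 - x" for x :: real
proof -
  assume x: "0 \<le> x" "x \<le> 1/2"
  have "- x - 2 * x\<^sup>2 \<le> ln (1 - x)" using ln_one_minus_pos_lower_bound[OF x] .
  moreover have "2 * x\<^sup>2 \<le> x" using x by (simp add: power2_eq_square) (metis mult_left_mono mult.commute mult_1 order_trans[OF _ order_refl] le_divide_eq_numeral1(1) mult.assoc)
  ultimately have "-2*x \<le> ln (1 - x)" by linarith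
  hence "exp (-2*x) \<le> exp (ln (1 - x))" by simp
  also have "\<dots> = 1 - x" using x by simp
  finally show ?thesis .
qed

lemma brun_L4:
  fixes Q :: "nat set" assumes fin: "finite Q" and pr: "\<forall>p\<in>Q. prime p"
  shows "(\<Prod>p\<in>Q. 1 - 1 / real p) \<ge> exp (- 2 * (\<Sum>p\<in>Q. 1 / real p))"
proof -
  have "exp (- 2 * (\<Sum>p\<in>Q. 1 / real p)) = (\<Prod>p\<in>Q. exp (-2 * (1 / real p)))"
    by (simp add: exp_sum[OF fin, symmetric] sum_distrib_left)
  also have "\<dots> \<le> (\<Prod>p\<in>Q. 1 - 1 / real p)"
  proof (rule prod_mono)
    fix p assume "p \<in> Q"
    hence "p \<ge> 2" using pr prime_ge_2_nat by auto
    hence "1 / real p \<le> 1/2" "0 \<le> 1 / real p" by auto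
    hence "exp (-2 * (1 / real p)) \<le> 1 - 1 / real p" by (intro one_minus_ge_exp) auto
    thus "0 \<le> exp (-2 * (1 / real p)) \<and> exp (-2 * (1 / real p)) \<le> 1 - 1 / real p" by simp
  qed
  finally show ?thesis .
qed

lemma card_F_bound:
  fixes Q :: "nat set" assumes fin: "finite Q"
  shows "real (card {A. A \<subseteq> Q \<and> card A \<le> r}) \<le> (real (card Q) + 1)^r"
proof -
  have "real (card {A. A \<subseteq> Q \<and> card A \<le> r}) = (\<Sum>A\<in>{A. A \<subseteq> Q \<and> card A \<le> r}. (\<lambda>_. 1::real) (card A))"
    by simp
  also have "\<dots> = (\<Sum>j\<le>r. real (card Q choose j) * 1)" by (rule sum_by_card[OF fin])
  also have "\<dots> \<le> (\<Sum>j\<le>r. real (r choose j) * real (card Q) ^ j * 1 ^ (r - j))"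
  proof (rule sum_mono)
    fix j assume j: "j \<in> {..r}"
    have "card Q choose j \<le> card Q ^ j"
      by (cases "j \<le> card Q") (auto simp: binomial_le_pow binomial_eq_0)
    hence "real (card Q choose j) \<le> real (card Q) ^ j" by (metis of_nat_le_iff of_nat_power)
    moreover have "0 < r choose j" using j by (intro zero_less_binomial) simp
    hence "real (r choose j) \<ge> 1" by (metis One_nat_def Suc_leI of_nat_1 of_nat_le_iff)
    ultimately have "real (card Q choose j) \<le> real (r choose j) * real (card Q) ^ j"
      by (metis mult_le_cancel_right1 order_trans mult.commute zero_le_power of_nat_0_le_iff mult_right_mono mult_1)
    thus "real (card Q choose j) * 1 \<le> real (r choose j) * real (card Q) ^ j * 1 ^ (r - j)" by simp
  qed
  also have "\<dots> = (real (card Q) + 1)^r" by (rule binomial_ring[symmetric])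
  finally show ?thesis .
qed

theorem brun:
  fixes Q :: "nat set" and D r :: nat
  assumes fin: "finite Q" and pr: "\<forall>p\<in>Q. prime p" and r: "odd r"
    and big: "2 * exp (5 * (\<Sum>p\<in>Q. 1 / real p)) \<le> 3^(Suc r)"
  shows "real (card {d\<in>{1..D}. \<forall>p\<in>Q. \<not> p dvd d})
         \<ge> real D * exp (- 2 * (\<Sum>p\<in>Q. 1 / real p)) / 2 - (real (card Q) + 1)^r"
proof -
  define S where "S = (\<Sum>p\<in>Q. 1 / real p)"
  define F where "F = {A. A \<subseteq> Q \<and> card A \<le> r}"
  have FP: "F \<subseteq> Pow Q" unfolding F_def by auto
  have finP: "finite (Pow Q)" using fin by simp
  have eqF: "(\<Sum>A\<in>F. (-1)^card A / real (\<Prod>A)) = (\<Sum>A\<in>Pow Q. (-1)^card A / real (\<Prod>A)) - (\<Sum>A\<in>Pow Q - F. (-1)^card A / real (\<Prod>A))"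
    using sum.subset_diff[OF FP finP, of "\<lambda>A. (-1)^card A / real (\<Prod>A)"] by simp
  have "(\<Sum>A\<in>Pow Q - F. (-1)^card A / real (\<Prod>A)) \<le> (\<Sum>A\<in>Pow Q - F. 1 / real (\<Prod>A))"
  proof (rule sum_mono)
    fix A assume "A \<in> Pow Q - F"
    have "(-1::real)^card A \<le> 1" by (cases "even (card A)") auto
    moreover have "real (\<Prod>A) \<ge> 0" by (rule of_nat_0_le_iff)
    ultimately show "(-1)^card A / real (\<Prod>A) \<le> 1 / real (\<Prod>A)" by (simp add: divide_right_mono)
  qed
  also have "(\<Sum>A\<in>Pow Q - F. 1 / real (\<Prod>A)) \<le> exp (3 * S) / 3^(Suc r)"
    unfolding S_def F_def by (rule brun_L3[OF fin pr])
  also have "exp (3 * S) / 3^(Suc r) \<le> exp (-2 * S) / 2"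
  proof -
    have "exp (3 * S) / 3^(Suc r) \<le> exp (3 * S) / (2 * exp (5 * S))"
      using big unfolding S_def by (intro divide_left_mono) auto
    also have "\<dots> = exp (-2 * S) / 2" by (simp add: exp_add[symmetric] exp_diff[symmetric] field_simps exp_minus)
    finally show ?thesis .
  qed
  finally have tl: "(\<Sum>A\<in>Pow Q - F. (-1)^card A / real (\<Prod>A)) \<le> exp (-2 * S) / 2" .
  have sF: "(\<Sum>A\<in>F. (-1)^card A / real (\<Prod>A)) \<ge> (\<Prod>p\<in>Q. 1 - 1 / real p) - exp (-2 * S) / 2"
    using brun_L2[OF fin] eqF tl by linarith
  have "(\<Prod>p\<in>Q. 1 - 1 / real p) \<ge> exp (-2 * S)" unfolding S_def by (rule brun_L4[OF fin pr])
  with sF have sF': "(\<Sum>A\<in>F. (-1)^card A / real (\<Prod>A)) \<ge> exp (-2 * S) / 2" by linarith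
  have a1: "real (card {d\<in>{1..D}. \<forall>p\<in>Q. \<not> p dvd d}) \<ge> (\<Sum>A\<in>F. (-1)^card A * real (D div \<Prod>A))"
    unfolding F_def by (rule brun_basic[OF fin pr r])
  have a2: "(\<Sum>A\<in>F. (-1)^card A * real (D div \<Prod>A)) \<ge> real D * (\<Sum>A\<in>F. (-1)^card A / real (\<Prod>A)) - real (card F)"
    unfolding F_def by (rule brun_L1[OF fin pr])
  have a3: "real D * (\<Sum>A\<in>F. (-1)^card A / real (\<Prod>A)) \<ge> real D * (exp (-2 * S) / 2)"
    using sF' by (intro mult_left_mono) auto
  have a4: "real (card F) \<le> (real (card Q) + 1)^r" unfolding F_def by (rule card_F_bound[OF fin])
  have "real D * exp (- 2 * S) / 2 = real D * (exp (-2 * S) / 2)" by simp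
  thus ?thesis using a1 a2 a3 a4 unfolding S_def by linarith
qed

lemma uniq_delta:
  fixes e e' d d' k :: nat
  assumes "1 \<le> e" "e < k" "1 \<le> e'" "e' < k"
    and r1: "\<forall>p. prime p \<and> p < k \<longrightarrow> \<not> p dvd d"
    and r2: "\<forall>p. prime p \<and> p < k \<longrightarrow> \<not> p dvd d'"
    and eq: "e * d = e' * d'"
  shows "e = e'"
proof -
  have cop: "coprime a b" if "1 \<le> a" "a < k" "\<forall>p. prime p \<and> p < k \<longrightarrow> \<not> p dvd b" for a b :: nat
  proof (rule ccontr)
    assume "\<not> coprime a b"
    hence "gcd a b \<noteq> 1" by (simp add: coprime_iff_gcd_eq_1)
    then obtain p where p: "prime p" "p dvd gcd a b" using prime_factor_nat by blast
    hence "p dvd a" "p dvd b" by auto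
    hence "p \<le> a" using that(1) by (intro dvd_imp_le) auto
    thus False using that p \<open>p dvd b\<close> by auto
  qed
  have "e dvd e' * d'" using eq by (metis dvd_triv_left)
  hence "e dvd e'" using cop[OF assms(1,2) r2] by (simp add: coprime_dvd_mult_left_iff)
  moreover have "e' dvd e * d" using eq by (metis dvd_triv_left)
  hence "e' dvd e" using cop[OF assms(3,4) r1] by (simp add: coprime_dvd_mult_left_iff)
  ultimately show ?thesis by (rule dvd_antisym)
qed

definition Qk :: "nat \<Rightarrow> nat set" where "Qk k = {p. prime p \<and> p < k}"
definition Sk :: "nat \<Rightarrow> real" where "Sk k = (\<Sum>p\<in>Qk k. 1 / real p)"
definition rk :: "nat \<Rightarrow> nat" where "rk k = 2 * nat \<lceil>3 * Sk k\<rceil> + 1"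
definition D1 :: "nat \<Rightarrow> real" where "D1 k = 4 * (real k + 1) ^ rk k * exp (2 * Sk k)"
definition rho :: "nat \<Rightarrow> real" where "rho k = min (1 / (4 * ln (D1 k))) (exp (- 2 * Sk k) / 4)"

lemma Qk_fin: "finite (Qk k)" unfolding Qk_def by simp
lemma Qk_prime: "\<forall>p\<in>Qk k. prime p" unfolding Qk_def by simp
lemma Sk_nonneg: "Sk k \<ge> 0" unfolding Sk_def by (intro sum_nonneg) auto
lemma D1_ge4: "D1 k \<ge> 4"
proof -
  have "(real k + 1) ^ rk k \<ge> 1" by simp
  moreover have "exp (2 * Sk k) \<ge> 1" using Sk_nonneg by simp
  ultimately have "(real k + 1) ^ rk k * exp (2 * Sk k) \<ge> 1" by (metis mult_mono' one_le_mult_iff zero_le_one order_trans mult_1 less_eq_real_def) 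
  thus ?thesis unfolding D1_def by simp
qed
lemma lnD1_pos: "ln (D1 k) > 0" using D1_ge4[of k] by simp
lemma rho_pos: "rho k > 0" unfolding rho_def using lnD1_pos[of k] by simp

lemma brun_cond: "2 * exp (5 * Sk k) \<le> 3 ^ Suc (rk k)"
proof -
  define S where "S = Sk k"
  have S0: "S \<ge> 0" unfolding S_def by (rule Sk_nonneg)
  have "real (Suc (rk k)) \<ge> 6 * S + 2" unfolding rk_def S_def by linarith
  hence "exp (6 * S + 2) \<le> exp (real (Suc (rk k)))" by simp
  also have "\<dots> = exp 1 ^ Suc (rk k)" by (metis exp_of_nat_mult mult.right_neutral)
  also have "\<dots> \<le> 3 ^ Suc (rk k)" using exp_le by (intro power_mono) auto
  finally have a: "exp (6 * S + 2) \<le> 3 ^ Suc (rk k)" .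
  have "exp (S + 2) \<ge> 2"
  proof -
    have "exp (S + 2) \<ge> 1 + (S + 2)" by (rule exp_ge_add_one_self)
    thus ?thesis using S0 by linarith
  qed
  hence "2 * exp (5 * S) \<le> exp (S + 2) * exp (5 * S)" by (intro mult_right_mono) auto
  also have "\<dots> = exp (6 * S + 2)" by (simp add: exp_add[symmetric])
  finally show ?thesis using a unfolding S_def by linarith
qed

lemma rough_count:
  fixes k D :: nat
  assumes D: "real D \<ge> 200" "real D \<ge> 4 * real k * ln (D1 k)"
  shows "real (card {d\<in>{1..D}. \<forall>p\<in>Qk k. \<not> p dvd d}) \<ge> rho k * real D"
proof (cases "real D \<ge> D1 k")
  case True
  have "real (card {d\<in>{1..D}. \<forall>p\<in>Qk k. \<not> p dvd d})
         \<ge> real D * exp (- 2 * Sk k) / 2 - (real (card (Qk k)) + 1)^rk k"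
    unfolding Sk_def
    by (rule brun[OF Qk_fin Qk_prime]) (use brun_cond[of k] in \<open>auto simp: rk_def Sk_def\<close>)
  moreover have "(real (card (Qk k)) + 1)^rk k \<le> (real k + 1)^rk k"
  proof -
    have "card (Qk k) \<le> k" unfolding Qk_def using card_mono[of "{..<k}" "{p. prime p \<and> p < k}"] by auto
    thus ?thesis by (intro power_mono) auto
  qed
  moreover have "(real k + 1)^rk k = D1 k * exp (- 2 * Sk k) / 4"
    unfolding D1_def by (simp add: exp_minus field_simps)
  moreover have "D1 k * exp (- 2 * Sk k) / 4 \<le> real D * exp (- 2 * Sk k) / 4"
    using True by (intro divide_right_mono mult_right_mono) auto
  moreover have "rho k * real D \<le> real D * exp (- 2 * Sk k) / 4"
  proof -
    have "rho k \<le> exp (- 2 * Sk k) / 4" unfolding rho_def by (rule min.cobounded2)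
    hence "rho k * real D \<le> (exp (- 2 * Sk k) / 4) * real D" by (intro mult_right_mono) auto
    thus ?thesis by (simp add: mult.commute)
  qed
  ultimately show ?thesis by linarith
next
  case False
  have D0: "D \<ge> 200" using D by simp
  have sub: "{p. prime p \<and> k \<le> p \<and> p \<le> D} \<subseteq> {d\<in>{1..D}. \<forall>p\<in>Qk k. \<not> p dvd d}"
  proof
    fix q assume q: "q \<in> {p. prime p \<and> k \<le> p \<and> p \<le> D}"
    hence "q \<ge> 1" using prime_ge_1_nat by auto
    moreover have "\<forall>p\<in>Qk k. \<not> p dvd q"
    proof
      fix p assume p: "p \<in> Qk k"
      show "\<not> p dvd q"
      proof
        assume "p dvd q"
        hence "p = q" using p q unfolding Qk_def by (intro primes_dvd_imp_eq) auto
        thus False using p q unfolding Qk_def by auto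
      qed
    qed
    ultimately show "q \<in> {d\<in>{1..D}. \<forall>p\<in>Qk k. \<not> p dvd d}" using q by auto
  qed
  have "primepi D \<le> card {p. prime p \<and> k \<le> p \<and> p \<le> D} + k"
  proof -
    have "{p. prime p \<and> p \<le> D} \<subseteq> {p. prime p \<and> k \<le> p \<and> p \<le> D} \<union> {..<k}" by auto
    hence "primepi D \<le> card ({p. prime p \<and> k \<le> p \<and> p \<le> D} \<union> {..<k})"
      unfolding primepi_def by (intro card_mono) auto
    also have "\<dots> \<le> card {p. prime p \<and> k \<le> p \<and> p \<le> D} + card {..<k}" by (rule card_Un_le)
    finally show ?thesis by simp
  qed
  moreover have "card {p. prime p \<and> k \<le> p \<and> p \<le> D} \<le> card {d\<in>{1..D}. \<forall>p\<in>Qk k. \<not> p dvd d}"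
    by (intro card_mono sub) auto
  ultimately have c1: "real (primepi D) \<le> real (card {d\<in>{1..D}. \<forall>p\<in>Qk k. \<not> p dvd d}) + real k" by linarith
  have c2: "real (primepi D) \<ge> real D / (2 * ln (real D))" by (rule cheb_lower[OF D0])
  have lnpos: "ln (real D) > 0" using D0 by simp
  have "ln (real D) \<le> ln (D1 k)" using False D0 by (subst ln_le_cancel_iff) auto
  hence c3: "real D / (2 * ln (real D)) \<ge> real D / (2 * ln (D1 k))"
    using lnpos by (intro divide_left_mono) auto
  have c4: "real D / (2 * ln (D1 k)) = 2 * (real D / (4 * ln (D1 k)))" by simp
  have c5: "real D / (4 * ln (D1 k)) \<ge> real k"
    using D(2) lnD1_pos[of k] by (simp add: field_simps)
  have c6: "rho k * real D \<le> real D / (4 * ln (D1 k))"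
  proof -
    have "rho k \<le> 1 / (4 * ln (D1 k))" unfolding rho_def by (rule min.cobounded1)
    hence "rho k * real D \<le> (1 / (4 * ln (D1 k))) * real D" by (intro mult_right_mono) auto
    thus ?thesis by simp
  qed
  show ?thesis using c1 c2 c3 c4 c5 c6 by linarith
qed

definition tk :: "nat \<Rightarrow> nat" where "tk k = nat \<lceil>12 * real k ^ 2 / rho k\<rceil> + 1"

lemma mono_card:
  fixes t n :: nat and c :: "nat \<Rightarrow> nat"
  assumes eq: "equinumerous_coloring t n c"
  shows "card {(x,y). x \<in> {1..t*n} \<and> y \<in> {1..t*n} \<and> c x = c y} \<le> t * n * n"
proof -
  define C where "C j = {x\<in>{1..t*n}. c x = j}" for j
  have sub: "{(x,y). x \<in> {1..t*n} \<and> y \<in> {1..t*n} \<and> c x = c y} \<subseteq> (\<Union>j\<in>{..<t}. C j \<times> C j)"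
  proof
    fix z assume "z \<in> {(x,y). x \<in> {1..t*n} \<and> y \<in> {1..t*n} \<and> c x = c y}"
    then obtain x y where z: "z = (x,y)" "x \<in> {1..t*n}" "y \<in> {1..t*n}" "c x = c y" by blast
    have "c x \<in> c ` {1..t*n}" using z by auto
    hence "c x < t" using eq unfolding equinumerous_coloring_def by auto
    thus "z \<in> (\<Union>j\<in>{..<t}. C j \<times> C j)" using z unfolding C_def by auto
  qed
  have cC: "card (C j) = n" if "j < t" for j
    using eq that unfolding equinumerous_coloring_def C_def by auto
  have fin: "finite (\<Union>j\<in>{..<t}. C j \<times> C j)" unfolding C_def by auto
  have "card {(x,y). x \<in> {1..t*n} \<and> y \<in> {1..t*n} \<and> c x = c y} \<le> card (\<Union>j\<in>{..<t}. C j \<times> C j)"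
    by (rule card_mono[OF fin sub])
  also have "\<dots> \<le> (\<Sum>j\<in>{..<t}. card (C j \<times> C j))" by (rule card_UN_le) simp
  also have "\<dots> = (\<Sum>j\<in>{..<t}. n * n)" by (intro sum.cong refl) (simp add: card_cartesian_product cC)
  also have "\<dots> = t * n * n" by simp
  finally show ?thesis .
qed

lemma good_tk:
  fixes k :: nat assumes k: "k \<ge> 17"
  shows "good k (tk k)"
  unfolding good_def
proof (intro allI impI)
  fix n :: nat and c :: "nat \<Rightarrow> nat"
  assume n: "n \<ge> 1" and eq: "equinumerous_coloring (tk k) n c"
  define t where "t = tk k"
  define N where "N = t * n"
  show "has_rainbow_AP k (tk k * n) c"
  proof (rule ccontr)
    assume nr: "\<not> has_rainbow_AP k (tk k * n) c"
    hence nr': "\<And>a d. 1 \<le> d \<Longrightarrow> 1 \<le> a \<Longrightarrow> a + (k - 1) * d \<le> N \<Longrightarrow> \<not> inj_on (\<lambda>i. c (a + i * d)) {..<k}"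
      unfolding has_rainbow_AP_def N_def t_def by blast
    have rp: "rho k > 0" by (rule rho_pos)
    have tbig: "real t > 12 * real k ^ 2 / rho k"
      unfolding t_def tk_def by linarith
    have Nt: "real N \<ge> real t"
    proof -
      have "real t * 1 \<le> real t * real n" using n by (intro mult_left_mono) auto
      thus ?thesis unfolding N_def by simp
    qed
    have rho1: "1 / rho k \<ge> 4 * ln (D1 k)"
    proof -
      have "rho k \<le> 1 / (4 * ln (D1 k))" unfolding rho_def by (rule min.cobounded1)
      thus ?thesis using rp lnD1_pos[of k] by (simp add: field_simps)
    qed
    have rho2: "1 / rho k \<ge> 4"
    proof -
      have "rho k \<le> exp (- 2 * Sk k) / 4" unfolding rho_def by (rule min.cobounded2)
      moreover have "exp (- 2 * Sk k) \<le> 1" using Sk_nonneg[of k] by simp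
      ultimately have "rho k * 4 \<le> 1" by linarith
      thus ?thesis using rp by (simp add: field_simps)
    qed
    have kpos: "real k \<ge> 17" using k by simp
    have e12: "12 * real k ^ 2 / rho k = 12 * real k ^ 2 * (1 / rho k)" by simp
    have k2: "12 * real k ^ 2 \<ge> 0" by simp
    have "12 * real k ^ 2 * (4 * ln (D1 k)) \<le> 12 * real k ^ 2 * (1 / rho k)"
      using rho1 k2 by (rule mult_left_mono)
    hence Nb1: "real N \<ge> 48 * real k ^ 2 * ln (D1 k)" using e12 tbig Nt by linarith
    have "12 * real k ^ 2 * 4 \<le> 12 * real k ^ 2 * (1 / rho k)"
      using rho2 k2 by (rule mult_left_mono)
    hence Nb2: "real N \<ge> 48 * real k ^ 2" using e12 tbig Nt by linarith
    define D where "D = N div (2 * k)"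
    have DN: "real D \<ge> real N / (2 * real k) - 1"
      using div_bounds_real(2)[of "2*k" N] k unfolding D_def by simp
    have N4k: "real N / (4 * real k) \<ge> 12 * real k"
    proof -
      have "real N \<ge> 48 * real k * real k" using Nb2 by (simp add: power2_eq_square)
      thus ?thesis using kpos by (simp add: field_simps)
    qed
    have Dq: "real D \<ge> real N / (4 * real k)"
    proof -
      have "real N / (2 * real k) = 2 * (real N / (4 * real k))" by simp
      thus ?thesis using DN N4k kpos by linarith
    qed
    have D200: "real D \<ge> 200" using Dq N4k kpos by linarith
    have Dln: "real D \<ge> 4 * real k * ln (D1 k)"
    proof -
      have "real N \<ge> 48 * real k * (real k * ln (D1 k))" using Nb1 by (simp add: power2_eq_square mult.assoc)
      hence "real N / (4 * real k) \<ge> 12 * (real k * ln (D1 k))" using kpos by (simp add: field_simps)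
      moreover have "real k * ln (D1 k) \<ge> 0" using lnD1_pos[of k] kpos by simp
      moreover have "4 * real k * ln (D1 k) = 4 * (real k * ln (D1 k))" by simp
      ultimately show ?thesis using Dq by linarith
    qed
    have kD2: "2 * (k * D) \<le> N"
    proof -
      have "N div (2 * k) * (2 * k) \<le> N" by (rule div_times_less_eq_dividend)
      moreover have "N div (2 * k) * (2 * k) = 2 * (k * D)" unfolding D_def by simp
      ultimately show ?thesis by simp
    qed
    have h2: "N div 2 + N div 2 \<le> N"
    proof -
      have "N div 2 * 2 \<le> N" by (rule div_times_less_eq_dividend)
      thus ?thesis by linarith
    qed
    define R where "R = {d\<in>{1..D}. \<forall>p\<in>Qk k. \<not> p dvd d}"
    have Rc: "real (card R) \<ge> rho k * real D" unfolding R_def by (rule rough_count[OF D200 Dln])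
    define G where "G = {1..N div 2} \<times> R"
    define M where "M = {(x,y). x \<in> {1..N} \<and> y \<in> {1..N} \<and> c x = c y}"
    have cM: "card M \<le> t * n * n" unfolding M_def N_def t_def using mono_card[OF eq] by simp
    define P where "P g z \<longleftrightarrow> (\<exists>j. snd z < j \<and> j < k \<and> fst (fst z) = fst g + snd z * snd g
                   \<and> snd (fst z) = fst g + j * snd g \<and> c (fst (fst z)) = c (snd (fst z)))" for g :: "nat \<times> nat" and z :: "(nat \<times> nat) \<times> nat"
    have exP: "\<exists>z. P g z" if "g \<in> G" for g
    proof -
      obtain a d where g: "g = (a,d)" "a \<in> {1..N div 2}" "d \<in> R" using \<open>g \<in> G\<close> unfolding G_def by auto
      have d1: "d \<ge> 1" "d \<le> D" using g unfolding R_def by auto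
      have "2 * (k * D) \<le> N" by (rule kD2)
      hence "k * D \<le> N div 2" by simp
      moreover have "(k - 1) * d \<le> k * D" using d1 by (intro mult_le_mono) auto
      ultimately have "a + (k - 1) * d \<le> N" using g h2 by auto
      hence "\<not> inj_on (\<lambda>i. c (a + i * d)) {..<k}" using nr' d1 g by auto
      then obtain i j where ij: "i < k" "j < k" "i \<noteq> j" "c (a + i * d) = c (a + j * d)"
        unfolding inj_on_def by auto
      show ?thesis
      proof (cases "i < j")
        case True
        hence "P g ((a + i*d, a + j*d), i)" unfolding P_def using ij g by auto
        thus ?thesis by blast
      next
        case False
        hence "j < i" using ij by simp
        hence "P g ((a + j*d, a + i*d), j)" unfolding P_def using ij g by auto
        thus ?thesis by blast
      qed
    qed
    define f where "f g = (SOME z. P g z)" for g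
    have Pf: "P g (f g)" if "g \<in> G" for g unfolding f_def using exP[OF that] by (rule someI_ex)
    have fmap: "f ` G \<subseteq> M \<times> {..<k}"
    proof
      fix z assume "z \<in> f ` G"
      then obtain g where g: "g \<in> G" "z = f g" by auto
      obtain a d where ad: "g = (a,d)" "a \<in> {1..N div 2}" "d \<in> R" using g unfolding G_def by auto
      have d1: "d \<ge> 1" "d \<le> D" using ad unfolding R_def by auto
      obtain j where j: "snd z < j" "j < k" "fst (fst z) = a + snd z * d" "snd (fst z) = a + j * d"
        "c (fst (fst z)) = c (snd (fst z))"
        using Pf[OF g(1)] g(2) ad unfolding P_def by auto
      have "2 * (k * D) \<le> N" by (rule kD2)
      hence kD: "k * D \<le> N div 2" by simp
      have "j * d \<le> k * D" using j d1 by (intro mult_le_mono) auto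
      hence "a + j * d \<le> N" using kD ad h2 by auto
      moreover have "snd z * d \<le> j * d" using j by simp
      ultimately have le1: "fst (fst z) \<le> N" "snd (fst z) \<le> N" using j by linarith+
      have ge1: "fst (fst z) \<ge> 1" "snd (fst z) \<ge> 1" using j ad by auto
      have "fst z \<in> M" unfolding M_def using le1 ge1 j(5) by (cases "fst z") auto
      moreover have "snd z \<in> {..<k}" using j by simp
      ultimately show "z \<in> M \<times> {..<k}" by (simp add: mem_Times_iff)
    qed
    have finj: "inj_on f G"
    proof (rule inj_onI)
      fix g g' assume g: "g \<in> G" and g': "g' \<in> G" and fe: "f g = f g'"
      obtain a d where ad: "g = (a,d)" "d \<in> R" using g unfolding G_def by auto
      obtain a' d' where ad': "g' = (a',d')" "d' \<in> R" using g' unfolding G_def by auto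
      obtain x y i where z: "f g = ((x,y),i)" by (metis prod.collapse)
      obtain j where j: "i < j" "j < k" "x = a + i * d" "y = a + j * d"
        using Pf[OF g] z ad unfolding P_def by auto
      obtain j' where j': "i < j'" "j' < k" "x = a' + i * d'" "y = a' + j' * d'"
        using Pf[OF g'] z fe ad' unfolding P_def by auto
      have r1: "\<forall>p. prime p \<and> p < k \<longrightarrow> \<not> p dvd d" using ad unfolding R_def Qk_def by auto
      have r2: "\<forall>p. prime p \<and> p < k \<longrightarrow> \<not> p dvd d'" using ad' unfolding R_def Qk_def by auto
      have e1: "y = x + (j - i) * d" using j by (simp add: diff_mult_distrib)
      have e2: "y = x + (j' - i) * d'" using j' by (simp add: diff_mult_distrib)
      have "(j - i) * d = (j' - i) * d'" using e1 e2 by simp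
      hence jj: "j - i = j' - i" using j j' r1 r2 by (intro uniq_delta[of "j-i" k "j'-i" d d']) auto
      hence "d = d'" using \<open>(j - i) * d = (j' - i) * d'\<close> j j' by simp
      moreover hence "a = a'" using j j' by simp
      ultimately show "g = g'" using ad ad' by simp
    qed
    have "card G \<le> card (M \<times> {..<k})"
    proof -
      have "finite M" by (rule finite_subset[of _ "{1..N} \<times> {1..N}"]) (auto simp: M_def)
      thus ?thesis by (intro card_inj_on_le[OF finj fmap]) simp
    qed
    hence "(N div 2) * card R \<le> card M * k" unfolding G_def by (simp add: card_cartesian_product)
    moreover have "card M * k \<le> t * n * n * k" using cM by (rule mult_le_mono1)
    ultimately have "(N div 2) * card R \<le> t * n * n * k" by (rule le_trans)
    hence A: "real (N div 2) * real (card R) \<le> real t * real n * real n * real k"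
      by (metis of_nat_le_iff of_nat_mult)
    have N3: "real (N div 2) \<ge> real N / 3"
    proof -
      have "real (N div 2) \<ge> real N / 2 - 1" using div_bounds_real(2)[of 2 N] by simp
      moreover have "real k ^ 2 \<ge> 1" using kpos by (intro one_le_power) simp
      ultimately show ?thesis using Nb2 by linarith
    qed
    have "real (card R) \<ge> rho k * (real N / (4 * real k))"
    proof -
      have "rho k * (real N / (4 * real k)) \<le> rho k * real D" using rp by (intro mult_left_mono[OF Dq]) simp
      thus ?thesis using Rc by linarith
    qed
    hence "real (N div 2) * real (card R) \<ge> (real N / 3) * (rho k * (real N / (4 * real k)))"
      using N3 rp kpos by (intro mult_mono) auto
    hence B: "real t * real n * real n * real k \<ge> (real N / 3) * (rho k * (real N / (4 * real k)))"
      using A by linarith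
    have NN: "real N = real t * real n" unfolding N_def by simp
    have "12 * real k ^ 2 / rho k \<ge> 0" using rp by simp
    hence tpos: "real t > 0" using tbig by linarith
    have npos: "real n > 0" using n by simp
    from B have "real t * real n * real n * real k * (12 * real k) \<ge> real t * real n * (real t * real n) * rho k"
      unfolding NN using kpos by (simp add: field_simps)
    hence "real n * real n * (real t * (12 * real k * real k)) \<ge> real n * real n * (real t * (real t * rho k))"
      by (simp add: algebra_simps)
    hence "real t * (12 * real k * real k) \<ge> real t * (real t * rho k)"
      using npos by (simp add: mult_le_cancel_left_pos)
    hence "12 * real k * real k \<ge> real t * rho k"
      using tpos by (simp add: mult_le_cancel_left_pos)
    moreover have "real t * rho k > 12 * real k ^ 2" using tbig rp by (simp add: field_simps)
    ultimately show False by (simp add: power2_eq_square)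
  qed
qed

definition sig :: "real \<Rightarrow> real" where "sig x = 5/2 + 2 * ln (log 2 x)"

definition H :: "real \<Rightarrow> real" where
  "H x = 12 * (4 * (ln 4 + (6 * sig x + 3) * ln (x + 1) + 2 * sig x) + 4 * exp (2 * sig x)) + 2 / x^2"

lemma H_eventually: "eventually (\<lambda>x. H x \<le> exp ((ln (ln x))^2)) at_top"
  unfolding H_def sig_def by real_asymp

lemma T_le_tk: "k \<ge> 17 \<Longrightarrow> T k \<le> tk k"
  unfolding T_def by (rule Least_le) (rule good_tk)

lemma T_bound:
  fixes k :: nat assumes k: "k \<ge> 17"
  shows "real (T k) \<le> real k ^ 2 * H (real k)"
proof -
  define S where "S = Sk k"
  have kpos: "real k \<ge> 17" using k by simp
  have Sle: "S \<le> sig (real k)"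
    unfolding S_def Sk_def Qk_def sig_def using S_bound[of k] k by simp
  have S0: "S \<ge> 0" unfolding S_def by (rule Sk_nonneg)
  have rp: "rho k > 0" by (rule rho_pos)
  have l0: "ln (D1 k) > 0" by (rule lnD1_pos)
  have inv: "1 / rho k \<le> 4 * ln (D1 k) + 4 * exp (2 * S)"
  proof (cases "1 / (4 * ln (D1 k)) \<le> exp (- 2 * Sk k) / 4")
    case True
    hence "rho k = 1 / (4 * ln (D1 k))" unfolding rho_def by simp
    thus ?thesis using l0 by simp
  next
    case False
    hence "rho k = exp (- 2 * Sk k) / 4" unfolding rho_def by simp
    hence "1 / rho k = 1 / (exp (- 2 * Sk k) / 4)" by (simp only:)
    also have "\<dots> = 4 / exp (- 2 * Sk k)" by simp
    also have "\<dots> = 4 * exp (2 * Sk k)" by (simp add: exp_minus field_simps)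
    finally have "1 / rho k = 4 * exp (2 * S)" unfolding S_def .
    thus ?thesis using l0 by simp
  qed
  have rk: "real (rk k) \<le> 6 * S + 3"
  proof -
    have c: "\<lceil>3 * S\<rceil> \<ge> 0" using S0 by simp
    have "real (nat \<lceil>3 * S\<rceil>) = of_int \<lceil>3 * S\<rceil>" using c by simp
    moreover have "of_int \<lceil>3 * S\<rceil> \<le> 3 * S + 1" by (rule of_int_ceiling_le_add_one)
    moreover have "real (rk k) = 2 * real (nat \<lceil>3 * S\<rceil>) + 1" unfolding rk_def S_def by simp
    ultimately show ?thesis by linarith
  qed
  have lnD: "ln (D1 k) = ln 4 + real (rk k) * ln (real k + 1) + 2 * S"
    unfolding D1_def S_def by (simp add: ln_mult ln_realpow)
  have l1: "ln (real k + 1) \<ge> 0" by simp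
  have "real (rk k) * ln (real k + 1) \<le> (6 * sig (real k) + 3) * ln (real k + 1)"
    using rk Sle l1 by (intro mult_right_mono) auto
  hence lnD': "ln (D1 k) \<le> ln 4 + (6 * sig (real k) + 3) * ln (real k + 1) + 2 * sig (real k)"
    using lnD Sle by linarith
  have eS: "exp (2 * S) \<le> exp (2 * sig (real k))" using Sle by simp
  have inv': "1 / rho k \<le> 4 * (ln 4 + (6 * sig (real k) + 3) * ln (real k + 1) + 2 * sig (real k)) + 4 * exp (2 * sig (real k))"
  proof -
    have "4 * ln (D1 k) + 4 * exp (2 * S) \<le> 4 * (ln 4 + (6 * sig (real k) + 3) * ln (real k + 1) + 2 * sig (real k)) + 4 * exp (2 * sig (real k))"
      by (intro add_mono mult_left_mono lnD' eS) auto
    thus ?thesis using inv by (rule order_trans[rotated])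
  qed
  have "real (T k) \<le> real (tk k)" using T_le_tk[OF k] by simp
  also have "\<dots> \<le> 12 * real k ^ 2 / rho k + 2"
  proof -
    have "12 * real k ^ 2 / rho k \<ge> 0" using rp by simp
    hence c: "\<lceil>12 * real k ^ 2 / rho k\<rceil> \<ge> 0" by simp
    have "real (nat \<lceil>12 * real k ^ 2 / rho k\<rceil>) = of_int \<lceil>12 * real k ^ 2 / rho k\<rceil>" using c by simp
    moreover have "of_int \<lceil>12 * real k ^ 2 / rho k\<rceil> \<le> 12 * real k ^ 2 / rho k + 1" by (rule of_int_ceiling_le_add_one)
    moreover have "real (tk k) = real (nat \<lceil>12 * real k ^ 2 / rho k\<rceil>) + 1" unfolding tk_def by simp
    ultimately show ?thesis by linarith
  qed
  also have "12 * real k ^ 2 / rho k = 12 * real k ^ 2 * (1 / rho k)" by simp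
  also have "\<dots> \<le> 12 * real k ^ 2 * (4 * (ln 4 + (6 * sig (real k) + 3) * ln (real k + 1) + 2 * sig (real k)) + 4 * exp (2 * sig (real k)))"
    using inv' by (intro mult_left_mono) auto
  also have "\<dots> + 2 = real k ^ 2 * H (real k)"
    unfolding H_def using kpos by (simp add: field_simps)
  finally show ?thesis by simp
qed

theorem theorem1:
  shows "\<exists>\<epsilon> :: nat \<Rightarrow> real. (\<epsilon> \<longlonglongrightarrow> 0) \<and>
    (\<forall>\<^sub>F k in sequentially.
       real (T k) \<le> (real k)^2 * exp ((1 + \<epsilon> k) * (ln (ln (real k)))^2))"
proof (intro exI conjI)
  show "(\<lambda>_. 0::real) \<longlonglongrightarrow> 0" by simp
  have E: "\<forall>\<^sub>F k in sequentially. H (real k) \<le> exp ((ln (ln (real k)))^2)"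
    using eventually_compose_filterlim[OF H_eventually filterlim_real_sequentially] .
  show "\<forall>\<^sub>F k in sequentially. real (T k) \<le> (real k)^2 * exp ((1 + (\<lambda>_. 0::real) k) * (ln (ln (real k)))^2)"
    using E eventually_ge_at_top[of "17::nat"]
  proof (eventually_elim)
    case (elim k)
    have "real (T k) \<le> real k ^ 2 * H (real k)" using T_bound elim(2) by simp
    also have "\<dots> \<le> real k ^ 2 * exp ((ln (ln (real k)))^2)" using elim(1) by (intro mult_left_mono) auto
    finally show ?case by simp
  qed
qed

end
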